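(* Let $(Q,\circ)$ and $(Q,* )$ be quandles on the same set $Q$ such that $$(a\circ b)*c=(a*c)\circ(b*c)\quad\text{and}\quad (a*b)\circ c=(a\circ c)*(b\circ c)\qquad\text{for all }a,b,c\in Q.$$ Then every finite word $w=s_1s_2\cdots s_k$ in the alphabet $\{\circ,*,\bar\circ,\bar*\}$ defines a quandle operation $\star_w$ on $Q$, where $$a\star_w b=(\cdots((a\,s_1\,b)\,s_2\,b)\cdots)\,s_k\,b$$ (and the empty word gives $a\star_w b=a$).
   Context: A quandle operation on a set $Q$ is a binary operation $*$ with $x*x=x$, unique right division, and $(x*y)*z=(x*z)*(y*z)$. For a quandle operation $*$, $\bar*$ denotes its right inverse operation: $a=c*b\iff c=a\,\bar*\,b$; similarly $\bar\circ$ for $\circ$. *)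

theory Defs
  imports Main
begin

definition quandle :: "('a \<Rightarrow> 'a \<Rightarrow> 'a) \<Rightarrow> bool" where
  "quandle op \<longleftrightarrow>
     (\<forall>x. op x x = x) \<and>
     (\<forall>a b. \<exists>!c. op c b = a) \<and>
     (\<forall>x y z. op (op x y) z = op (op x z) (op y z))"

definition rinv :: "('a \<Rightarrow> 'a \<Rightarrow> 'a) \<Rightarrow> 'a \<Rightarrow> 'a \<Rightarrow> 'a" where
  "rinv op a b = (THE c. op c b = a)"

datatype letter = Circ | Star | CircBar | StarBar

fun letter_op :: "('a \<Rightarrow> 'a \<Rightarrow> 'a) \<Rightarrow> ('a \<Rightarrow> 'a \<Rightarrow> 'a) \<Rightarrow> letter \<Rightarrow> 'a \<Rightarrow> 'a \<Rightarrow> 'a" where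
  "letter_op circ star Circ a b = circ a b"
| "letter_op circ star Star a b = star a b"
| "letter_op circ star CircBar a b = rinv circ a b"
| "letter_op circ star StarBar a b = rinv star a b"

fun word_op :: "('a \<Rightarrow> 'a \<Rightarrow> 'a) \<Rightarrow> ('a \<Rightarrow> 'a \<Rightarrow> 'a) \<Rightarrow> letter list \<Rightarrow> 'a \<Rightarrow> 'a \<Rightarrow> 'a" where
  "word_op circ star [] a b = a"
| "word_op circ star (s # w) a b = word_op circ star w (letter_op circ star s a b) b"

end

theory Submission
  imports Defs
begin

lemma rinv_l: assumes "quandle op" shows "op (rinv op a b) b = a"
proof -
  from assms have "\<exists>!c. op c b = a" by (simp add: quandle_def)
  then show ?thesis unfolding rinv_def by (rule theI')
qed

lemma rinv_uniq: assumes "quandle op" "op c b = a" shows "rinv op a b = c"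
proof -
  from assms(1) have u: "\<exists>!c. op c b = a" by (simp add: quandle_def)
  show ?thesis using u assms(2) rinv_l[OF assms(1), of a b] by blast
qed

lemma rinv_r: assumes "quandle op" shows "rinv op (op a b) b = a"
  using rinv_uniq[OF assms] by simp

lemma hom_rinv:
  assumes "quandle op" "\<And>a b. f (op a b) = op (f a) (f b)"
  shows "f (rinv op a b) = rinv op (f a) (f b)"
proof (rule sym, rule rinv_uniq[OF assms(1)])
  show "op (f (rinv op a b)) (f b) = f a"
    using assms(2)[of "rinv op a b" b] rinv_l[OF assms(1), of a b] by simp
qed

definition hom2 where
  "hom2 circ star f \<longleftrightarrow> (\<forall>a b. f (circ a b) = circ (f a) (f b) \<and> f (star a b) = star (f a) (f b))"

context
  fixes circ star :: "'a \<Rightarrow> 'a \<Rightarrow> 'a"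
  assumes qc: "quandle circ" and qs: "quandle star"
    and d1: "\<And>a b c. star (circ a b) c = circ (star a c) (star b c)"
    and d2: "\<And>a b c. circ (star a b) c = star (circ a c) (circ b c)"
begin

lemma sdc: "circ (circ x y) z = circ (circ x z) (circ y z)" using qc by (simp add: quandle_def)
lemma sds: "star (star x y) z = star (star x z) (star y z)" using qs by (simp add: quandle_def)

lemma hom_letter_comm:
  assumes "hom2 circ star f"
  shows "f (letter_op circ star s a b) = letter_op circ star s (f a) (f b)"
  using assms hom_rinv[OF qc, of f] hom_rinv[OF qs, of f]
  by (cases s) (auto simp: hom2_def)

lemma hom_word_comm:
  assumes "hom2 circ star f"
  shows "f (word_op circ star w a b) = word_op circ star w (f a) (f b)"
proof (induction w arbitrary: a)
  case Nil then show ?case by simp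
next
  case (Cons s w)
  have "f (word_op circ star (s # w) a b) = f (word_op circ star w (letter_op circ star s a b) b)" by simp
  also have "\<dots> = word_op circ star w (f (letter_op circ star s a b)) (f b)" by (rule Cons.IH)
  also have "f (letter_op circ star s a b) = letter_op circ star s (f a) (f b)" by (rule hom_letter_comm[OF assms])
  finally show ?case by simp
qed

lemma letter_hom: "hom2 circ star (\<lambda>x. letter_op circ star s x z)"
proof (cases s)
  case Circ show ?thesis unfolding Circ hom2_def letter_op.simps using sdc d2 by blast
next
  case Star show ?thesis unfolding Star hom2_def letter_op.simps using sds d1 by blast
next
  case CircBar
  have "rinv circ (circ a b) z = circ (rinv circ a z) (rinv circ b z)" for a b
    by (rule rinv_uniq[OF qc]) (subst sdc, simp only: rinv_l[OF qc])
  moreover have "rinv circ (star a b) z = star (rinv circ a z) (rinv circ b z)" for a b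
    by (rule rinv_uniq[OF qc]) (subst d2, simp only: rinv_l[OF qc])
  ultimately show ?thesis using CircBar by (simp add: hom2_def)
next
  case StarBar
  have "rinv star (star a b) z = star (rinv star a z) (rinv star b z)" for a b
    by (rule rinv_uniq[OF qs]) (subst sds, simp only: rinv_l[OF qs])
  moreover have "rinv star (circ a b) z = circ (rinv star a z) (rinv star b z)" for a b
    by (rule rinv_uniq[OF qs]) (subst d1, simp only: rinv_l[OF qs])
  ultimately show ?thesis using StarBar by (simp add: hom2_def)
qed

lemma word_hom: "hom2 circ star (\<lambda>x. word_op circ star w x z)"
proof (induction w)
  case Nil then show ?case by (simp add: hom2_def)
next
  case (Cons s w)
  then show ?case using letter_hom[of s z] by (simp add: hom2_def)
qed

lemma letter_idem: "letter_op circ star s b b = b"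
proof -
  have a: "circ b b = b" "star b b = b" using qc qs by (simp_all add: quandle_def)
  show ?thesis using rinv_uniq[OF qc a(1)] rinv_uniq[OF qs a(2)] a by (cases s) simp_all
qed

lemma word_idem: "word_op circ star w b b = b"
  by (induction w) (simp_all add: letter_idem)

lemma letter_div: "\<exists>!c. letter_op circ star s c b = a"
proof (cases s)
  case Circ then show ?thesis using qc by (simp add: quandle_def)
next
  case Star then show ?thesis using qs by (simp add: quandle_def)
next
  case CircBar show ?thesis
    unfolding CircBar letter_op.simps
  proof (rule ex1I[of _ "circ a b"])
    show "rinv circ (circ a b) b = a" by (rule rinv_r[OF qc])
  next
    fix y assume "rinv circ y b = a"
    then show "y = circ a b" using rinv_l[OF qc, of y b] by simp
  qed
next
  case StarBar show ?thesis
    unfolding StarBar letter_op.simps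
  proof (rule ex1I[of _ "star a b"])
    show "rinv star (star a b) b = a" by (rule rinv_r[OF qs])
  next
    fix y assume "rinv star y b = a"
    then show "y = star a b" using rinv_l[OF qs, of y b] by simp
  qed
qed

lemma word_div: "\<exists>!c. word_op circ star w c b = a"
proof (induction w arbitrary: a)
  case Nil then show ?case by simp
next
  case (Cons s w)
  from Cons.IH[of a] obtain c' where c': "word_op circ star w c' b = a"
    and u': "\<And>y. word_op circ star w y b = a \<Longrightarrow> y = c'" by blast
  from letter_div[of s b c'] obtain c where c: "letter_op circ star s c b = c'"
    and u: "\<And>y. letter_op circ star s y b = c' \<Longrightarrow> y = c" by blast
  show ?case
  proof (rule ex1I[of _ c])
    show "word_op circ star (s # w) c b = a" using c c' by simp
  next
    fix y assume "word_op circ star (s # w) y b = a"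
    then have "letter_op circ star s y b = c'" using u' by simp
    then show "y = c" by (rule u)
  qed
qed

end

theorem theorem4p11:
  fixes circ star :: "'a \<Rightarrow> 'a \<Rightarrow> 'a" and w :: "letter list"
  assumes "quandle circ" and "quandle star"
    and "\<And>a b c. star (circ a b) c = circ (star a c) (star b c)"
    and "\<And>a b c. circ (star a b) c = star (circ a c) (circ b c)"
  shows "quandle (word_op circ star w)"
proof -
  note ctx = assms(1,2,3,4)
  have sd: "\<forall>x y z. word_op circ star w (word_op circ star w x y) z =
        word_op circ star w (word_op circ star w x z) (word_op circ star w y z)"
  proof (intro allI)
    fix x y z
    show "word_op circ star w (word_op circ star w x y) z =
        word_op circ star w (word_op circ star w x z) (word_op circ star w y z)"
    proof -
      have h: "hom2 circ star (\<lambda>x. word_op circ star w x z)" by (rule word_hom[where circ=circ and star=star, OF ctx])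
      show ?thesis by (rule hom_word_comm[where circ=circ and star=star, OF ctx h])
    qed
  qed
  have id: "\<forall>x. word_op circ star w x x = x" using word_idem[where circ=circ and star=star, OF ctx] by (rule allI)
  have dv: "\<forall>a b. \<exists>!c. word_op circ star w c b = a" using word_div[where circ=circ and star=star, OF ctx] by (intro allI)
  show ?thesis unfolding quandle_def using sd id dv by (intro conjI)
qed

end
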